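(* Let $\omega\ge1$ and $n>2$ be integers, $r=2^\omega$, $R=2^{\omega n}$, and assume $n<r$. Let $p$ be a positive integer with $p<R$, let $r^{-1}$ be a positive integer with $rr^{-1}\equiv1\pmod p$, and set $p'=(rr^{-1}-1)/p$ (an integer). Let $T$ be an integer with $0\le T<pR$, and for $1\le i\le 2n$ let $T_i=\lfloor T/r^{i-1}\rfloor\bmod r$. For $1\le i\le n-2$ let $M_i\in\{0,\dots,p-1\}$ satisfy $M_i\equiv (r^{-1})^{\,n-i-1}\pmod p$, and let $H_i=M_iT_i$. Define $$T^{(n-2)}=\lfloor T/r^{n-2}\rfloor+\sum_{i=1}^{n-2}H_i,$$ and for $i=n-1,n$ define $Q_i=(T^{(i-1)}p')\bmod r$ and $T^{(i)}=(T^{(i-1)}+Q_ip)/r$. Let $U=T^{(n)}$; if $U\ge p$ replace $U$ by $U-p$; then again, if $U\ge p$ replace $U$ by $U-p$. Then all $T^{(i)}$ are integers and the final value satisfies $U=TR^{-1}\bmod p$, where $R^{-1}$ denotes an inverse of $R$ modulo $p$.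
   Context: Here $x\bmod m$ denotes the least nonnegative residue. The congruence $M_i\equiv r^{-n+i+1}\pmod p$ in the paper is interpreted with $r^{-1}$ the inverse of $r$ modulo $p$. The quantity $TR^{-1}\bmod p$ is the Montgomery reduction of $T$. *)

theory Defs
  imports "HOL-Number_Theory.Number_Theory"
begin

end

theory Submission
  imports Defs
begin
lemma digits: fixes T r :: int assumes "r > 0"
  shows "T = r^k * (T div r^k) + (\<Sum>i<k. ((T div r^i) mod r) * r^i)"
proof (induction k)
  case 0 then show ?case by simp
next
  case (Suc k)
  have d: "T div r^Suc k = T div r^k div r"
    unfolding power_Suc2 using assms by (intro zdiv_zmult2_eq) simp
  have e: "T div r^k = r * (T div r^Suc k) + (T div r^k) mod r"
    unfolding d by (metis mult_div_mod_eq)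
  show ?case
    apply (subst Suc)
    apply (subst e)
    by (simp add: algebra_simps)
qed

lemma digits1: fixes T r :: int assumes "r > 0"
  shows "T = r^k * (T div r^k) + (\<Sum>i=1..k. ((T div r^(i-1)) mod r) * r^(i-1))"
proof -
  have "(\<Sum>i=1..k. ((T div r^(i-1)) mod r) * r^(i-1)) = (\<Sum>i<k. ((T div r^i) mod r) * r^i)"
    by (rule sum.reindex_bij_witness[of _ "\<lambda>i. i+1" "\<lambda>i. i-1"]) auto
  with digits[OF assms, of T k] show ?thesis by simp
qed

lemma redc_step: fixes X r p rinv :: int
  assumes "p * p' = r * rinv - 1" "r > 0"
  shows "r dvd (X + (X * p') mod r * p)"
proof -
  have "r dvd ((X * p') mod r - X * p')" by (metis cong_iff_dvd_diff cong_mod_left cong_refl)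
  then have "r dvd ((X * p') mod r - X * p') * p" by simp
  moreover have "X + (X * p') mod r * p = ((X * p') mod r - X * p') * p + X * (p * p' + 1)"
    by (simp add: algebra_simps)
  moreover have "X * (p * p' + 1) = r * (X * rinv)" using assms(1) by simp
  ultimately show ?thesis by (metis dvd_add dvd_triv_left)
qed
theorem theorem2:
  fixes \<omega> n :: nat and p rinv Rinv T :: int and M :: "nat \<Rightarrow> int"
  assumes "\<omega> \<ge> 1" and "n > 2" and "int n < (2::int) ^ \<omega>"
    and "0 < p" and "p < (2::int) ^ (\<omega> * n)"
    and "0 < rinv" and "[(2::int) ^ \<omega> * rinv = 1] (mod p)"
    and "0 \<le> T" and "T < p * (2::int) ^ (\<omega> * n)"
    and "\<forall>i\<in>{1..n-2}. 0 \<le> M i \<and> M i < p \<and> [M i = rinv ^ (n - i - 1)] (mod p)"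
    and "[(2::int) ^ (\<omega> * n) * Rinv = 1] (mod p)"
  shows "let r = (2::int) ^ \<omega>;
             p' = (r * rinv - 1) div p;
             Tb = (\<lambda>i::nat. (T div r ^ (i - 1)) mod r);
             H = (\<lambda>i::nat. M i * Tb i);
             T0 = T div r ^ (n - 2) + (\<Sum>i = 1..n-2. H i);
             Q1 = (T0 * p') mod r;
             T1 = (T0 + Q1 * p) div r;
             Q2 = (T1 * p') mod r;
             T2 = (T1 + Q2 * p) div r;
             U1 = (if T2 \<ge> p then T2 - p else T2);
             U2 = (if U1 \<ge> p then U1 - p else U1)
         in r dvd (T0 + Q1 * p) \<and> r dvd (T1 + Q2 * p) \<and> U2 = (T * Rinv) mod p"
proof -
  define r where "r = (2::int)^\<omega>"
  define p' where "p' = (r*rinv - 1) div p"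
  define Tb where "Tb = (\<lambda>i::nat. (T div r^(i-1)) mod r)"
  define T0 where "T0 = T div r^(n-2) + (\<Sum>i=1..n-2. M i * Tb i)"
  define Q1 where "Q1 = (T0*p') mod r"
  define T1 where "T1 = (T0 + Q1*p) div r"
  define Q2 where "Q2 = (T1*p') mod r"
  define T2 where "T2 = (T1 + Q2*p) div r"
  define U1 where "U1 = (if T2 \<ge> p then T2 - p else T2)"
  define U2 where "U2 = (if U1 \<ge> p then U1 - p else U1)"
  have r2: "r \<ge> 2" unfolding r_def using power_increasing[of 1 \<omega> "2::int"] assms(1) by simp
  hence r0: "r > 0" by simp
  have "p dvd r*rinv - 1" using assms(7) unfolding r_def by (simp add: cong_iff_dvd_diff)
  hence pp': "p*p' = r*rinv - 1" unfolding p'_def by simp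
  have D1: "r dvd T0 + Q1*p" unfolding Q1_def by (rule redc_step[OF pp' r0])
  have D2: "r dvd T1 + Q2*p" unfolding Q2_def by (rule redc_step[OF pp' r0])
  have rT1: "r*T1 = T0 + Q1*p" unfolding T1_def using D1 by simp
  have rT2: "r*T2 = T1 + Q2*p" unfolding T2_def using D2 by simp
  have c1: "[r*T1 = T0] (mod p)" unfolding rT1 by (simp add: cong_iff_dvd_diff)
  have c2: "[r*T2 = T1] (mod p)" unfolding rT2 by (simp add: cong_iff_dvd_diff)
  have cM: "[r^(n-2) * M i = r^(i-1)] (mod p)" if i: "i \<in> {1..n-2}" for i
  proof -
    have "[r^(n-2) * M i = r^(n-2) * rinv^(n-i-1)] (mod p)"
      using assms(10) i by (intro cong_mult cong_refl) auto
    moreover have "r^(n-2) * rinv^(n-i-1) = r^(i-1) * (r*rinv)^(n-i-1)"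
    proof -
      have "n-2 = (i-1) + (n-i-1)" using i by auto
      hence "r^(n-2) = r^(i-1) * r^(n-i-1)" by (metis power_add)
      thus ?thesis by (simp add: power_mult_distrib)
    qed
    moreover have "[r^(i-1) * (r*rinv)^(n-i-1) = r^(i-1) * 1^(n-i-1)] (mod p)"
      using assms(7) unfolding r_def by (intro cong_mult cong_refl cong_pow)
    ultimately show ?thesis by (simp add: cong_trans)
  qed
  have c0: "[r^(n-2) * T0 = T] (mod p)"
  proof -
    have dg: "T = r^(n-2) * (T div r^(n-2)) + (\<Sum>i=1..n-2. Tb i * r^(i-1))"
      unfolding Tb_def by (rule digits1[OF r0])
    have e: "r^(n-2) * T0 = r^(n-2) * (T div r^(n-2)) + (\<Sum>i=1..n-2. (r^(n-2) * M i) * Tb i)"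
      unfolding T0_def by (simp add: algebra_simps sum_distrib_left)
    have c: "[(\<Sum>i=1..n-2. (r^(n-2) * M i) * Tb i) = (\<Sum>i=1..n-2. Tb i * r^(i-1))] (mod p)"
    proof (rule cong_sum)
      fix i assume "i \<in> {1..n-2}"
      from cong_scalar_right[OF cM[OF this], of "Tb i"]
      show "[r^(n-2) * M i * Tb i = Tb i * r^(i-1)] (mod p)" by (simp add: mult.commute)
    qed
    have "[r^(n-2) * T0 = r^(n-2) * (T div r^(n-2)) + (\<Sum>i=1..n-2. Tb i * r^(i-1))] (mod p)"
      unfolding e by (rule cong_add[OF cong_refl c])
    thus ?thesis using dg by simp
  qed
  have "n = (n-2) + 2" using assms(2) by simp
  hence rn: "r^n = r^(n-2) * r * r" by (metis power_add power2_eq_square mult.assoc)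
  have cn: "[r^n * T2 = T] (mod p)"
  proof -
    have "r^n * T2 = r^(n-2) * (r * (r*T2))" unfolding rn by (simp add: algebra_simps)
    moreover have "[r^(n-2) * (r * (r*T2)) = r^(n-2) * (r*T1)] (mod p)"
      using c2 by (intro cong_mult cong_refl)
    moreover have "[r^(n-2) * (r*T1) = r^(n-2) * T0] (mod p)"
      using c1 by (intro cong_mult cong_refl)
    ultimately show ?thesis using c0 by (metis cong_trans)
  qed
  have rnR: "[r^n * Rinv = 1] (mod p)" using assms(11) unfolding r_def by (simp add: power_mult)
  have cT2: "[T2 = T*Rinv] (mod p)"
  proof -
    have "[T2 * (r^n*Rinv) = T2 * 1] (mod p)" using rnR by (intro cong_mult cong_refl)
    hence "[T2 = (r^n*T2)*Rinv] (mod p)" by (simp add: algebra_simps cong_sym_eq)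
    moreover have "[(r^n*T2)*Rinv = T*Rinv] (mod p)" using cn by (intro cong_mult cong_refl)
    ultimately show ?thesis by (rule cong_trans)
  qed
  have Tbb: "0 \<le> Tb i \<and> Tb i \<le> r - 1" for i unfolding Tb_def using r0
    using pos_mod_bound[OF r0, of "T div r^(i-1)"] by simp
  have Hb: "0 \<le> M i * Tb i \<and> M i * Tb i \<le> (p-1)*(r-1)" if "i \<in> {1..n-2}" for i
  proof -
    have "0 \<le> M i" "M i \<le> p - 1" using assms(10) that by auto
    thus ?thesis using Tbb[of i] by (simp add: mult_mono)
  qed
  define S where "S = (\<Sum>i=1..n-2. M i * Tb i)"
  have S0: "0 \<le> S" unfolding S_def using Hb by (intro sum_nonneg) auto
  have "S \<le> of_nat (card {1..n-2}) * ((p-1)*(r-1))" unfolding S_def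
    by (rule sum_bounded_above) (use Hb in auto)
  hence S1: "S \<le> int (n-2) * ((p-1)*(r-1))" by simp
  have "int (n-2) = int n - 2" using assms(2) by simp
  hence n2: "int (n-2) \<le> r - 1" using assms(3) unfolding r_def by linarith
  have pr: "0 \<le> (p-1)*(r-1)" using assms(4) r0 by simp
  have "S \<le> (r-1) * ((p-1)*(r-1))" using S1 mult_right_mono[OF n2 pr] by linarith
  also have "\<dots> \<le> r * ((p-1)*r)" using assms(4) r0 by (intro mult_mono) auto
  also have "\<dots> < p * r^2" using r0 by (simp add: algebra_simps power2_eq_square)
  finally have S2: "S < p * r^2" .
  define m where "m = T div r^(n-2)"
  have rk: "r^(n-2) > 0" using r0 by simp
  have m0: "0 \<le> m" unfolding m_def using assms(8) rk by (simp add: pos_imp_zdiv_nonneg_iff)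
  have "m * r^(n-2) = T - T mod r^(n-2)" unfolding m_def by (simp add: minus_mod_eq_div_mult)
  moreover have "T mod r^(n-2) \<ge> 0" using rk by simp
  ultimately have "m * r^(n-2) \<le> T" by linarith
  also have "T < (p * r^2) * r^(n-2)"
  proof -
    have "2 + (n-2) = n" using assms(2) by simp
    hence ee: "\<omega>*2 + \<omega>*(n-2) = \<omega>*n" by (metis distrib_left)
    have eq: "(p * r^2) * r^(n-2) = p * 2^(\<omega>*n)" using ee unfolding r_def
      using assms(2) by (simp add: power_mult[symmetric] power_add[symmetric] mult.commute)
    show ?thesis unfolding eq by (rule assms(9))
  qed
  finally have m1: "m < p * r^2" using rk by (simp add: mult_less_cancel_right)
  have T0eq: "T0 = m + S" unfolding T0_def m_def S_def by simp
  have T00: "0 \<le> T0" "T0 < 2*p*r^2" using T0eq m0 m1 S0 S2 by auto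
  have Q1b: "0 \<le> Q1" "Q1 \<le> r - 1" unfolding Q1_def using r0 by (simp_all add: int_one_le_iff_zero_less pos_mod_bound)
  have Q2b: "0 \<le> Q2" "Q2 \<le> r - 1" unfolding Q2_def using r0 by (simp_all add: int_one_le_iff_zero_less pos_mod_bound)
  have "Q1 * p \<le> (r-1)*p" using Q1b assms(4) by (simp add: mult_right_mono)
  hence "r*T1 < r*(2*p*r + p)" using rT1 T00 assms(4) by (simp add: algebra_simps power2_eq_square)
  hence T11: "T1 < 2*p*r + p" using r0 by simp
  have "0 \<le> r*T1" unfolding rT1 using T00 Q1b assms(4) by simp
  hence T10: "0 \<le> T1" using r0 by (simp add: zero_le_mult_iff)
  have "Q2 * p \<le> (r-1)*p" using Q2b assms(4) by (simp add: mult_right_mono)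
  hence "r*T2 < r*(3*p)" using rT2 T11 assms(4) by (simp add: algebra_simps)
  hence T21: "T2 < 3*p" using r0 by simp
  have "0 \<le> r*T2" unfolding rT2 using T10 Q2b assms(4) by simp
  hence T20: "0 \<le> T2" using r0 by (simp add: zero_le_mult_iff)
  have U2c: "U2 = T2 \<or> U2 = T2 - p \<or> U2 = T2 - 2*p" unfolding U2_def U1_def by auto
  have U2b: "0 \<le> U2 \<and> U2 < p" unfolding U2_def U1_def using T20 T21 by auto
  have "U2 mod p = T2 mod p" using U2c by (auto simp: mod_diff_eq[symmetric])
  hence U2eq: "U2 = (T*Rinv) mod p" using U2b cT2 unfolding cong_def by simp
  have "r dvd (T0 + Q1 * p) \<and> r dvd (T1 + Q2 * p) \<and> U2 = (T * Rinv) mod p"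
    using D1 D2 U2eq by simp
  then show ?thesis unfolding Let_def U2_def U1_def T2_def Q2_def T1_def Q1_def T0_def Tb_def p'_def r_def
    by simp
qed
end
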